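(* There are absolute constants $\kappa_0\ge1$ and $c>0$ such that the following holds for every $\epsilon\in(0,1/4)$. Any quantum query algorithm which, given unitaries $\mathcal O_\rho,\mathcal O_\sigma$ preparing purifications of arbitrary mixed states $\rho,\sigma$ satisfying $\rho\ge I/\kappa_0$ and $\sigma\ge I/\kappa_0$, outputs an estimate of $F(\rho,\sigma)$ within additive error $\epsilon$ with probability at least $2/3$, must make at least $c/\epsilon$ queries to $\mathcal O_\rho,\mathcal O_\sigma$ on some such input. In other words, fidelity estimation to additive error $\epsilon$ requires $\Omega(1/\epsilon)$ queries even when $\kappa_\rho=\kappa_\sigma=\Theta(1)$.
   Context: The (Uhlmann) fidelity is $F(\rho,\sigma):=\operatorname{Tr}\big((\sigma^{1/2}\rho\sigma^{1/2})^{1/2}\big)$. A unitary $\mathcal O_\rho$ on $n+a$ qubits prepares a purification of $\rho$ if $\operatorname{Tr}_a(\mathcal O_\rho|0\rangle\langle0|\mathcal O_\rho^\dagger)=\rho$. A query means one use of any of $\mathcal O$, $\mathcal O^\dagger$, controlled-$\mathcal O$, controlled-$\mathcal O^\dagger$. Inequalities are in the Loewner order. *)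

theory Defs
  imports "HOL-Analysis.Analysis" "Jordan_Normal_Form.Matrix"
begin

definition adj :: "complex mat \<Rightarrow> complex mat" where
  "adj A = mat (dim_col A) (dim_row A) (\<lambda>(i,j). cnj (A $$ (j,i)))"

definition mtrace :: "complex mat \<Rightarrow> complex" where
  "mtrace A = (\<Sum>i<dim_row A. A $$ (i,i))"

definition is_unitary :: "nat \<Rightarrow> complex mat \<Rightarrow> bool" where
  "is_unitary d U \<longleftrightarrow> U \<in> carrier_mat d d \<and> U * adj U = 1\<^sub>m d \<and> adj U * U = 1\<^sub>m d"

definition psd :: "nat \<Rightarrow> complex mat \<Rightarrow> bool" where
  "psd d A \<longleftrightarrow> A \<in> carrier_mat d d \<and> adj A = A \<and>
     (\<forall>v :: nat \<Rightarrow> complex. 0 \<le> Re (\<Sum>i<d. \<Sum>j<d. cnj (v i) * A $$ (i,j) * v j))"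

definition loewner_ge :: "nat \<Rightarrow> complex mat \<Rightarrow> complex mat \<Rightarrow> bool" where
  "loewner_ge d A B \<longleftrightarrow> A \<in> carrier_mat d d \<and> B \<in> carrier_mat d d \<and> psd d (A - B)"

definition msqrt :: "nat \<Rightarrow> complex mat \<Rightarrow> complex mat" where
  "msqrt d A = (THE B. psd d B \<and> B * B = A)"

definition fidelity :: "nat \<Rightarrow> complex mat \<Rightarrow> complex mat \<Rightarrow> real" where
  "fidelity d \<rho> \<sigma> = Re (mtrace (msqrt d (msqrt d \<sigma> * \<rho> * msqrt d \<sigma>)))"

definition density :: "nat \<Rightarrow> complex mat \<Rightarrow> bool" where
  "density d \<rho> \<longleftrightarrow> psd d \<rho> \<and> mtrace \<rho> = 1"

definition kron :: "complex mat \<Rightarrow> complex mat \<Rightarrow> complex mat" where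
  "kron A B = mat (dim_row A * dim_row B) (dim_col A * dim_col B)
     (\<lambda>(i,j). A $$ (i div dim_row B, j div dim_col B) * B $$ (i mod dim_row B, j mod dim_col B))"

definition basis_proj :: "nat \<Rightarrow> nat \<Rightarrow> complex mat" where
  "basis_proj d b = mat d d (\<lambda>(i,j). if i = b \<and> j = b then 1 else 0)"

definition ptrace2 :: "nat \<Rightarrow> nat \<Rightarrow> complex mat \<Rightarrow> complex mat" where
  "ptrace2 dS dA M = mat dS dS (\<lambda>(i,j). \<Sum>k<dA. M $$ (i * dA + k, j * dA + k))"

text \<open>O (on n system qubits followed by a ancilla qubits) prepares a purification of rho.\<close>
definition prepares :: "nat \<Rightarrow> nat \<Rightarrow> complex mat \<Rightarrow> complex mat \<Rightarrow> bool" where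
  "prepares n a W \<rho> \<longleftrightarrow> is_unitary (2^(n+a)) W \<and>
     ptrace2 (2^n) (2^a) (W * basis_proj (2^(n+a)) 0 * adj W) = \<rho>"

datatype qkind = QPlain | QInv | QCtrl | QCtrlInv

text \<open>A query algorithm on m qubits with T queries: unitaries U 0, ..., U T, and
  the (t+1)-th query (t < T) is given by qry t = (use_rho, kind): which oracle and
  which of O, O^dagger, controlled-O, controlled-O^dagger is used. Since arbitrary
  unitaries are interleaved, the oracle acts w.l.o.g. on the first k qubits, and a
  controlled query uses qubit 0 as control and the following k qubits as target.
  At the end all m qubits are measured in the computational basis; outcome x yields
  estimate out x.\<close>
record qalg =
  ws  :: nat
  nq  :: nat
  U   :: "nat \<Rightarrow> complex mat"
  qry :: "nat \<Rightarrow> bool \<times> qkind"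
  out :: "nat \<Rightarrow> real"

definition embed :: "nat \<Rightarrow> nat \<Rightarrow> qkind \<Rightarrow> complex mat \<Rightarrow> complex mat" where
  "embed m k q W = (case q of
      QPlain \<Rightarrow> kron W (1\<^sub>m (2^(m-k)))
    | QInv \<Rightarrow> kron (adj W) (1\<^sub>m (2^(m-k)))
    | QCtrl \<Rightarrow> kron (basis_proj 2 0) (1\<^sub>m (2^(m-1)))
                + kron (basis_proj 2 1) (kron W (1\<^sub>m (2^(m-1-k))))
    | QCtrlInv \<Rightarrow> kron (basis_proj 2 0) (1\<^sub>m (2^(m-1)))
                + kron (basis_proj 2 1) (kron (adj W) (1\<^sub>m (2^(m-1-k)))))"

definition query_op :: "qalg \<Rightarrow> nat \<Rightarrow> nat \<Rightarrow> nat \<Rightarrow> complex mat \<Rightarrow> complex mat \<Rightarrow> nat \<Rightarrow> complex mat" where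
  "query_op A n a1 a2 Or Os t = (case qry A t of
      (True, q) \<Rightarrow> embed (ws A) (n + a1) q Or
    | (False, q) \<Rightarrow> embed (ws A) (n + a2) q Os)"

fun run_op :: "qalg \<Rightarrow> nat \<Rightarrow> nat \<Rightarrow> nat \<Rightarrow> complex mat \<Rightarrow> complex mat \<Rightarrow> nat \<Rightarrow> complex mat" where
  "run_op A n a1 a2 Or Os 0 = U A 0"
| "run_op A n a1 a2 Or Os (Suc t) = U A (Suc t) * query_op A n a1 a2 Or Os t * run_op A n a1 a2 Or Os t"

definition success_prob :: "qalg \<Rightarrow> nat \<Rightarrow> nat \<Rightarrow> nat \<Rightarrow> complex mat \<Rightarrow> complex mat \<Rightarrow> real \<Rightarrow> real \<Rightarrow> real" where
  "success_prob A n a1 a2 Or Os f \<epsilon> =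
     (\<Sum>x \<in> {x. x < 2^(ws A) \<and> \<bar>out A x - f\<bar> \<le> \<epsilon>}.
        (cmod (run_op A n a1 a2 Or Os (nq A) $$ (x, 0)))\<^sup>2)"

text \<open>Well-formed algorithm for oracles of the given format: enough workspace for a
  controlled query, and all interleaved operations unitary.\<close>
definition valid_alg :: "nat \<Rightarrow> nat \<Rightarrow> nat \<Rightarrow> qalg \<Rightarrow> bool" where
  "valid_alg n a1 a2 A \<longleftrightarrow> n + max a1 a2 + 1 \<le> ws A \<and>
     (\<forall>t \<le> nq A. is_unitary (2^(ws A)) (U A t))"

definition estimates_fidelity :: "real \<Rightarrow> nat \<Rightarrow> nat \<Rightarrow> nat \<Rightarrow> real \<Rightarrow> qalg \<Rightarrow> bool" where
  "estimates_fidelity \<kappa>0 n a1 a2 \<epsilon> A \<longleftrightarrow>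
     (\<forall>Or Os \<rho> \<sigma>.
        density (2^n) \<rho> \<and> density (2^n) \<sigma> \<and>
        prepares n a1 Or \<rho> \<and> prepares n a2 Os \<sigma> \<and>
        loewner_ge (2^n) \<rho> ((1 / complex_of_real \<kappa>0) \<cdot>\<^sub>m 1\<^sub>m (2^n)) \<and>
        loewner_ge (2^n) \<sigma> ((1 / complex_of_real \<kappa>0) \<cdot>\<^sub>m 1\<^sub>m (2^n))
      \<longrightarrow> success_prob A n a1 a2 Or Os (fidelity (2^n) \<rho> \<sigma>) \<epsilon> \<ge> 2/3)"

end

theory Submission
  imports Defs
begin

definition mv :: "complex mat \<Rightarrow> (nat \<Rightarrow> complex) \<Rightarrow> nat \<Rightarrow> complex" where
  "mv M v = (\<lambda>i. \<Sum>j<dim_col M. M $$ (i,j) * v j)"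

definition nsq :: "nat \<Rightarrow> (nat \<Rightarrow> complex) \<Rightarrow> real" where
  "nsq N v = (\<Sum>i<N. (cmod (v i))^2)"

definition nrm :: "nat \<Rightarrow> (nat \<Rightarrow> complex) \<Rightarrow> real" where
  "nrm N v = sqrt (nsq N v)"

definition bnd :: "nat \<Rightarrow> complex mat \<Rightarrow> complex mat \<Rightarrow> real \<Rightarrow> bool" where
  "bnd N X Y C \<longleftrightarrow> (\<forall>u. nsq N (\<lambda>i. mv X u i - mv Y u i) \<le> C * nsq N u)"

definition contr :: "nat \<Rightarrow> complex mat \<Rightarrow> bool" where
  "contr N X \<longleftrightarrow> (\<forall>u. nsq N (mv X u) \<le> nsq N u)"

lemma nsq_nonneg: "0 \<le> nsq N v"
  by (simp add: nsq_def sum_nonneg)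

lemma nrm_nonneg: "0 \<le> nrm N v"
  unfolding nrm_def using nsq_nonneg by simp

lemma nrm_L2: "nrm N v = L2_set (\<lambda>i. cmod (v i)) {..<N}"
  by (simp add: nrm_def nsq_def L2_set_def)

lemma nsq_cong: "(\<And>i. i < N \<Longrightarrow> u i = w i) \<Longrightarrow> nsq N u = nsq N w"
  unfolding nsq_def by (rule sum.cong) auto

lemma nrm_cong: "(\<And>i. i < N \<Longrightarrow> u i = w i) \<Longrightarrow> nrm N u = nrm N w"
  unfolding nrm_def using nsq_cong by metis

lemma nrm_triangle: "nrm N (\<lambda>i. u i + w i) \<le> nrm N u + nrm N w"
proof -
  have "nrm N (\<lambda>i. u i + w i) \<le> L2_set (\<lambda>i. cmod (u i) + cmod (w i)) {..<N}"
    unfolding nrm_L2 by (rule L2_set_mono) (auto intro: norm_triangle_ineq)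
  also have "\<dots> \<le> nrm N u + nrm N w" unfolding nrm_L2 by (rule L2_set_triangle_ineq)
  finally show ?thesis .
qed

lemma nsq_to_nrm:
  assumes "nsq N u \<le> C\<^sup>2 * nsq N w" "0 \<le> C"
  shows "nrm N u \<le> C * nrm N w"
proof -
  have "sqrt (nsq N u) \<le> sqrt (C\<^sup>2 * nsq N w)" using assms(1) by (rule real_sqrt_le_mono)
  also have "\<dots> = C * nrm N w" using assms(2) by (simp add: real_sqrt_mult nrm_def)
  finally show ?thesis by (simp add: nrm_def)
qed

lemma mv_cong: "(\<And>j. j < dim_col M \<Longrightarrow> f j = g j) \<Longrightarrow> mv M f i = mv M g i"
  unfolding mv_def by (rule sum.cong) auto

lemma mv_diff: "mv X (\<lambda>j. u j - w j) i = mv X u i - mv X w i"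
  unfolding mv_def by (simp add: right_diff_distrib sum_subtractf)

lemma mv_add: "mv X (\<lambda>j. u j + w j) i = mv X u i + mv X w i"
  unfolding mv_def by (simp add: distrib_left sum.distrib)

lemma mv_mat_plus:
  assumes "dim_col X = dim_col Y" "i < dim_row Y"
  shows "mv (X + Y) v i = mv X v i + mv Y v i"
  unfolding mv_def using assms by (simp add: distrib_right sum.distrib)

lemma mv_zero: "i < a \<Longrightarrow> mv (0\<^sub>m a b) v i = 0"
  unfolding mv_def by simp

lemma mult_entry_mv:
  assumes "dim_col A = dim_row B" "i < dim_row A" "j < dim_col B"
  shows "(A * B) $$ (i,j) = mv A (\<lambda>k. B $$ (k,j)) i"
  using assms by (simp add: mv_def scalar_prod_def atLeast0LessThan mult.commute)

lemma mv_mult: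
  assumes "dim_col A = dim_row B" "i < dim_row A"
  shows "mv (A*B) v i = mv A (mv B v) i"
proof -
  have "mv (A*B) v i = (\<Sum>j<dim_col B. (\<Sum>k<dim_row B. A$$(i,k) * B$$(k,j)) * v j)"
    unfolding mv_def using assms by (auto simp: scalar_prod_def atLeast0LessThan intro!: sum.cong)
  also have "\<dots> = (\<Sum>j<dim_col B. (\<Sum>k<dim_row B. A$$(i,k) * (B$$(k,j) * v j)))"
    by (simp add: sum_distrib_right mult.assoc)
  also have "\<dots> = (\<Sum>k<dim_row B. (\<Sum>j<dim_col B. A$$(i,k) * (B$$(k,j) * v j)))"
    by (rule sum.swap)
  also have "\<dots> = (\<Sum>k<dim_row B. A$$(i,k) * (\<Sum>j<dim_col B. B$$(k,j) * v j))"
    by (simp add: sum_distrib_left)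
  finally show ?thesis using assms by (simp add: mv_def)
qed

lemma nsq_complex: "complex_of_real (nsq N v) = (\<Sum>i<N. cnj (v i) * v i)"
  unfolding nsq_def of_real_sum by (rule sum.cong) (simp_all only: complex_norm_square mult.commute)

lemma mult_delta: "(c::complex) * (if P then 1 else 0) = (if P then c else 0)"
  by simp

lemma unitary_nsq:
  assumes X: "X \<in> carrier_mat N N" and U: "adj X * X = 1\<^sub>m N"
  shows "nsq N (mv X v) = nsq N v"
proof -
  have key: "(\<Sum>i<N. cnj (X$$(i,j)) * X$$(i,k)) = (if j = k then 1 else 0)" if "j<N" "k<N" for j k
  proof -
    have "(adj X * X) $$ (j,k) = (\<Sum>i<N. cnj (X$$(i,j)) * X$$(i,k))"
      using X that by (simp add: adj_def scalar_prod_def atLeast0LessThan)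
    then show ?thesis using U that by simp
  qed
  have "complex_of_real (nsq N (mv X v)) = (\<Sum>i<N. (\<Sum>j<N. cnj (X$$(i,j)) * cnj (v j)) * (\<Sum>k<N. X$$(i,k) * v k))"
    unfolding nsq_complex mv_def using X by simp
  also have "\<dots> = (\<Sum>i<N. \<Sum>j<N. \<Sum>k<N. (cnj (X$$(i,j)) * cnj (v j)) * (X$$(i,k) * v k))"
    by (simp only: sum_product)
  also have "\<dots> = (\<Sum>i<N. \<Sum>j<N. \<Sum>k<N. cnj (v j) * v k * (cnj (X$$(i,j)) * X$$(i,k)))"
    by (intro sum.cong refl) (simp add: mult_ac)
  also have "\<dots> = (\<Sum>j<N. \<Sum>i<N. \<Sum>k<N. cnj (v j) * v k * (cnj (X$$(i,j)) * X$$(i,k)))"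
    by (rule sum.swap)
  also have "\<dots> = (\<Sum>j<N. \<Sum>k<N. \<Sum>i<N. cnj (v j) * v k * (cnj (X$$(i,j)) * X$$(i,k)))"
    by (rule sum.cong[OF refl], rule sum.swap)
  also have "\<dots> = (\<Sum>j<N. \<Sum>k<N. cnj (v j) * v k * (if j = k then 1 else 0))"
    by (intro sum.cong refl) (simp add: sum_distrib_left[symmetric] key del: sum_distrib_left)
  also have "\<dots> = (\<Sum>j<N. cnj (v j) * v j)"
    by (intro sum.cong refl) (simp add: mult_delta sum.delta sum.delta')
  also have "\<dots> = complex_of_real (nsq N v)" by (simp add: nsq_complex)
  finally show ?thesis by (simp only: of_real_eq_iff)
qed

lemma sum_blocks: fixes a b :: nat shows "(\<Sum>i<a*b. f i) = (\<Sum>p<a. \<Sum>r<b. f (p*b + r))"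
proof (induction a)
  case 0 then show ?case by simp
next
  case (Suc a)
  have e: "{..<Suc a * b} = {..<a*b} \<union> (\<lambda>r. a*b + r) ` {..<b}"
  proof (intro equalityI subsetI)
    fix x assume x: "x \<in> {..<Suc a * b}"
    show "x \<in> {..<a*b} \<union> (\<lambda>r. a*b + r) ` {..<b}"
    proof (cases "x < a*b")
      case False
      then have "x = a*b + (x - a*b)" "x - a*b < b" using x by auto
      then show ?thesis by blast
    qed simp
  qed auto
  have "(\<Sum>i<Suc a*b. f i) = (\<Sum>i<a*b. f i) + (\<Sum>i\<in>(\<lambda>r. a*b + r) ` {..<b}. f i)"
    unfolding e by (rule sum.union_disjoint) auto
  also have "(\<Sum>i\<in>(\<lambda>r. a*b + r) ` {..<b}. f i) = (\<Sum>r<b. f (a*b + r))"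
    by (subst sum.reindex) (auto simp: inj_on_def)
  finally show ?case using Suc.IH by (simp only: sum.lessThan_Suc)
qed

lemma blk_div: assumes "r < (b::nat)" shows "(p*b + r) div b = p" "(p*b + r) mod b = r"
  using assms by (auto simp: add.commute[of "p*b"])

lemma blk_lt: assumes "p < (a::nat)" "r < b" shows "p*b + r < a*b"
proof -
  have "p*b + r < p*b + b" using assms by simp
  also have "p*b + b = Suc p * b" by simp
  also have "\<dots> \<le> a*b" using assms by (intro mult_le_mono1) simp
  finally show ?thesis .
qed

lemma nsq_blocks: "nsq (a*b) w = (\<Sum>r<b. nsq a (\<lambda>p. w (p*b + r)))"
  unfolding nsq_def by (subst sum_blocks) (rule sum.swap)

lemma nsq_two: "nsq (2*H) w = nsq H w + nsq H (\<lambda>r. w (H + r))"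
  unfolding nsq_def by (subst sum_blocks) (simp add: numeral_2_eq_2)

lemma kron_mv:
  assumes X: "X \<in> carrier_mat a a" and B: "B \<in> carrier_mat b b" and i: "i < a*b"
  shows "mv (kron X B) v i = (\<Sum>p<a. X$$(i div b, p) * (\<Sum>r<b. B$$(i mod b, r) * v (p*b + r)))"
proof -
  have "mv (kron X B) v i = (\<Sum>j<a*b. X$$(i div b, j div b) * B$$(i mod b, j mod b) * v j)"
    unfolding mv_def kron_def using X B i by (intro sum.cong) auto
  also have "\<dots> = (\<Sum>p<a. \<Sum>r<b. X$$(i div b, p) * B$$(i mod b, r) * v (p*b+r))"
    by (subst sum_blocks) (intro sum.cong refl, simp add: blk_div)
  also have "\<dots> = (\<Sum>p<a. X$$(i div b, p) * (\<Sum>r<b. B$$(i mod b, r) * v (p*b + r)))"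
    by (simp add: sum_distrib_left mult.assoc)
  finally show ?thesis .
qed

lemma kron_I_mv:
  assumes X: "X \<in> carrier_mat a a" and i: "i < a*b"
  shows "mv (kron X (1\<^sub>m b)) v i = mv X (\<lambda>p. v (p*b + i mod b)) (i div b)"
proof -
  have b: "0 < b" using i by (cases b) auto
  have im: "i mod b < b" using b by simp
  have inner: "(\<Sum>r<b. 1\<^sub>m b $$ (i mod b, r) * v (p*b + r)) = v (p*b + i mod b)" for p
  proof -
    have "(\<Sum>r<b. 1\<^sub>m b $$ (i mod b, r) * v (p*b + r)) = (\<Sum>r<b. if r = i mod b then v (p*b + r) else 0)"
      using im by (intro sum.cong) auto
    also have "\<dots> = v (p*b + i mod b)" using im by (simp add: sum.delta)
    finally show ?thesis .
  qed
  have "mv (kron X (1\<^sub>m b)) v i = (\<Sum>p<a. X$$(i div b, p) * v (p*b + i mod b))"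
    using kron_mv[OF X one_carrier_mat i] inner by simp
  also have "\<dots> = mv X (\<lambda>p. v (p*b + i mod b)) (i div b)" using X by (simp add: mv_def)
  finally show ?thesis .
qed

lemma kron_I_bnd:
  assumes X: "X \<in> carrier_mat a a" and Y: "Y \<in> carrier_mat a a" and H: "bnd a X Y C"
  shows "bnd (a*b) (kron X (1\<^sub>m b)) (kron Y (1\<^sub>m b)) C"
  unfolding bnd_def
proof
  fix v :: "nat \<Rightarrow> complex"
  let ?s = "\<lambda>r p. v (p*b + r)"
  have "nsq (a*b) (\<lambda>i. mv (kron X (1\<^sub>m b)) v i - mv (kron Y (1\<^sub>m b)) v i)
      = (\<Sum>r<b. nsq a (\<lambda>p. mv X (?s r) p - mv Y (?s r) p))"
    unfolding nsq_blocks
    by (intro sum.cong refl nsq_cong) (simp add: kron_I_mv[OF X] kron_I_mv[OF Y] blk_div blk_lt)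
  also have "\<dots> \<le> (\<Sum>r<b. C * nsq a (?s r))"
    using H unfolding bnd_def by (intro sum_mono) auto
  also have "\<dots> = C * nsq (a*b) v" by (simp add: nsq_blocks sum_distrib_left)
  finally show "nsq (a*b) (\<lambda>i. mv (kron X (1\<^sub>m b)) v i - mv (kron Y (1\<^sub>m b)) v i) \<le> C * nsq (a*b) v" .
qed

lemma kron_I_contr:
  assumes X: "X \<in> carrier_mat a a" and H: "contr a X"
  shows "contr (a*b) (kron X (1\<^sub>m b))"
  unfolding contr_def
proof
  fix v :: "nat \<Rightarrow> complex"
  let ?s = "\<lambda>r p. v (p*b + r)"
  have "nsq (a*b) (mv (kron X (1\<^sub>m b)) v) = (\<Sum>r<b. nsq a (mv X (?s r)))"
    unfolding nsq_blocks
    by (intro sum.cong refl nsq_cong) (simp add: kron_I_mv[OF X] blk_div blk_lt)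
  also have "\<dots> \<le> (\<Sum>r<b. nsq a (?s r))"
    using H unfolding contr_def by (intro sum_mono) auto
  also have "\<dots> = nsq (a*b) v" by (simp add: nsq_blocks)
  finally show "nsq (a*b) (mv (kron X (1\<^sub>m b)) v) \<le> nsq (a*b) v" .
qed

definition ctrlm :: "nat \<Rightarrow> complex mat \<Rightarrow> complex mat" where
  "ctrlm H Y = kron (basis_proj 2 0) (1\<^sub>m H) + kron (basis_proj 2 1) Y"

lemma basis_proj_carrier: "basis_proj d b \<in> carrier_mat d d"
  by (simp add: basis_proj_def)

lemma kron_carrier:
  assumes "A \<in> carrier_mat a a" "B \<in> carrier_mat b b"
  shows "kron A B \<in> carrier_mat (a*b) (a*b)"
proof -
  have "dim_row A = a" "dim_col A = a" "dim_row B = b" "dim_col B = b"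
    using assms by auto
  then show ?thesis unfolding kron_def by simp
qed

lemma sum_2: "(\<Sum>p<(2::nat). f p) = f 0 + f 1"
proof -
  have "{..<(2::nat)} = {0,1}" by auto
  then show ?thesis by simp
qed

lemma bp_entry: "x < d \<Longrightarrow> y < d \<Longrightarrow> basis_proj d c $$ (x,y) = (if x = c \<and> y = c then 1 else 0)"
  by (simp add: basis_proj_def)

lemma mv_one: "j < H \<Longrightarrow> mv (1\<^sub>m H) w j = w j"
proof -
  assume j: "j < H"
  have "mv (1\<^sub>m H) w j = (\<Sum>r<H. if r = j then w r else 0)"
    unfolding mv_def using j by (intro sum.cong) auto
  also have "\<dots> = w j" using j by (simp add: sum.delta)
  finally show ?thesis .
qed

lemma kron_bp_mv:
  assumes c: "c < 2" and B: "B \<in> carrier_mat H H" and i: "i < 2*H"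
  shows "mv (kron (basis_proj 2 c) B) v i = (if i div H = c then mv B (\<lambda>r. v (c*H + r)) (i mod H) else 0)"
proof -
  let ?T = "\<lambda>p. (\<Sum>r<H. B$$(i mod H, r) * v (p*H + r))"
  have id: "i div H < 2" using i by (simp add: less_mult_imp_div_less)
  have "mv (kron (basis_proj 2 c) B) v i = (\<Sum>p<2. basis_proj 2 c $$ (i div H, p) * ?T p)"
    by (rule kron_mv[OF basis_proj_carrier B i])
  also have "\<dots> = (\<Sum>p<2. if p = c then (if i div H = c then ?T p else 0) else 0)"
    using id by (intro sum.cong refl) (simp add: bp_entry)
  also have "\<dots> = (if i div H = c then ?T c else 0)" using c by (simp add: sum.delta)
  also have "?T c = mv B (\<lambda>r. v (c*H + r)) (i mod H)" using B by (simp add: mv_def)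
  finally show ?thesis .
qed

lemma ctrl_mv:
  assumes Y: "Y \<in> carrier_mat H H" and i: "i < 2*H"
  shows "mv (ctrlm H Y) v i = (if i < H then v i else mv Y (\<lambda>r. v (H + r)) (i - H))"
proof -
  have c1: "kron (basis_proj 2 0) (1\<^sub>m H) \<in> carrier_mat (2*H) (2*H)"
    by (intro kron_carrier basis_proj_carrier one_carrier_mat)
  have c2: "kron (basis_proj 2 1) Y \<in> carrier_mat (2*H) (2*H)"
    by (intro kron_carrier basis_proj_carrier Y)
  have "mv (ctrlm H Y) v i = mv (kron (basis_proj 2 0) (1\<^sub>m H)) v i + mv (kron (basis_proj 2 1) Y) v i"
    unfolding ctrlm_def using c1 c2 i by (intro mv_mat_plus) auto
  also have "\<dots> = (if i div H = 0 then mv (1\<^sub>m H) (\<lambda>r. v (0*H + r)) (i mod H) else 0)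
      + (if i div H = 1 then mv Y (\<lambda>r. v (1*H + r)) (i mod H) else 0)"
    using kron_bp_mv[of 0 "1\<^sub>m H" H i v] kron_bp_mv[of 1 Y H i v] Y i by simp
  also have "\<dots> = (if i < H then v i else mv Y (\<lambda>r. v (H + r)) (i - H))"
  proof (cases "i < H")
    case True
    then have d: "i div H = 0" "i mod H = i" by auto
    show ?thesis using True by (simp add: d mv_one)
  next
    case False
    have d1: "i div H < 2" using i by (simp add: less_mult_imp_div_less)
    have Hp: "0 < H" using i by (cases H) auto
    have "H div H \<le> i div H" using False by (intro div_le_mono) simp
    then have "1 \<le> i div H" using Hp by simp
    then have d: "i div H = 1" using d1 by simp
    have "i div H * H + i mod H = i" by (rule div_mult_mod_eq)
    then have d2: "i mod H = i - H" using d by simp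
    show ?thesis using False by (simp add: d d2)
  qed
  finally show ?thesis .
qed

lemma ctrl_bnd:
  assumes Y: "Y \<in> carrier_mat H H" and Y': "Y' \<in> carrier_mat H H" and B: "bnd H Y Y' C" and C: "0 \<le> C"
  shows "bnd (2*H) (ctrlm H Y) (ctrlm H Y') C"
  unfolding bnd_def
proof
  fix v :: "nat \<Rightarrow> complex"
  have "nsq (2*H) (\<lambda>i. mv (ctrlm H Y) v i - mv (ctrlm H Y') v i)
     = nsq H (\<lambda>i. mv (ctrlm H Y) v i - mv (ctrlm H Y') v i) + nsq H (\<lambda>r. mv Y (\<lambda>r. v (H + r)) r - mv Y' (\<lambda>r. v (H + r)) r)"
    unfolding nsq_two by (intro arg_cong2[where f="(+)"] refl nsq_cong) (simp add: ctrl_mv[OF Y] ctrl_mv[OF Y'])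
  also have "nsq H (\<lambda>i. mv (ctrlm H Y) v i - mv (ctrlm H Y') v i) = 0"
    unfolding nsq_def by (intro sum.neutral) (simp add: ctrl_mv[OF Y] ctrl_mv[OF Y'])
  also have "nsq H (\<lambda>r. mv Y (\<lambda>r. v (H + r)) r - mv Y' (\<lambda>r. v (H + r)) r) \<le> C * nsq H (\<lambda>r. v (H + r))"
    using B unfolding bnd_def by blast
  also have "\<dots> \<le> C * nsq (2*H) v"
    unfolding nsq_two using C nsq_nonneg[of H v] by (simp add: mult_left_mono)
  finally show "nsq (2*H) (\<lambda>i. mv (ctrlm H Y) v i - mv (ctrlm H Y') v i) \<le> C * nsq (2*H) v" by simp
qed

lemma ctrl_contr:
  assumes Y: "Y \<in> carrier_mat H H" and B: "contr H Y"
  shows "contr (2*H) (ctrlm H Y)"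
  unfolding contr_def
proof
  fix v :: "nat \<Rightarrow> complex"
  have "nsq (2*H) (mv (ctrlm H Y) v) = nsq H v + nsq H (mv Y (\<lambda>r. v (H + r)))"
    unfolding nsq_two by (intro arg_cong2[where f="(+)"] nsq_cong) (simp_all add: ctrl_mv[OF Y])
  also have "\<dots> \<le> nsq H v + nsq H (\<lambda>r. v (H + r))"
    using B unfolding contr_def by simp
  finally show "nsq (2*H) (mv (ctrlm H Y) v) \<le> nsq (2*H) v" unfolding nsq_two .
qed


lemma adj_carrier: "W \<in> carrier_mat d d \<Longrightarrow> adj W \<in> carrier_mat d d"
  unfolding adj_def by auto

lemma embed_props:
  assumes km: "k + 1 \<le> m"
  and W: "W \<in> carrier_mat (2^k) (2^k)" and W': "W' \<in> carrier_mat (2^k) (2^k)"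
  and cW: "contr (2^k) W" and cWa: "contr (2^k) (adj W)"
  and bW: "bnd (2^k) W W' C" and bWa: "bnd (2^k) (adj W) (adj W') C" and C: "0 \<le> C"
  shows "contr (2^m) (embed m k q W) \<and> bnd (2^m) (embed m k q W) (embed m k q W') C"
proof -
  have e1: "(2::nat)^k * 2^(m-k) = 2^m" using km by (simp add: power_add[symmetric])
  have e2: "2 * (2::nat)^(m-1) = 2^m" using km by (cases m) auto
  have e3: "(2::nat)^k * 2^(m-1-k) = 2^(m-1)" using km by (simp add: power_add[symmetric])
  have Wa: "adj W \<in> carrier_mat (2^k) (2^k)" using W by (rule adj_carrier)
  have Wa': "adj W' \<in> carrier_mat (2^k) (2^k)" using W' by (rule adj_carrier)
  have ctrl: "contr (2^m) (ctrlm (2^(m-1)) (kron X (1\<^sub>m (2^(m-1-k)))))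
     \<and> bnd (2^m) (ctrlm (2^(m-1)) (kron X (1\<^sub>m (2^(m-1-k))))) (ctrlm (2^(m-1)) (kron X' (1\<^sub>m (2^(m-1-k))))) C"
    if X: "X \<in> carrier_mat (2^k) (2^k)" and X': "X' \<in> carrier_mat (2^k) (2^k)"
      and cX: "contr (2^k) X" and bX: "bnd (2^k) X X' C" for X X'
  proof -
    have Y: "kron X (1\<^sub>m (2^(m-1-k))) \<in> carrier_mat (2^(m-1)) (2^(m-1))"
      using kron_carrier[OF X one_carrier_mat, of "2^(m-1-k)"] by (simp only: e3)
    have Y': "kron X' (1\<^sub>m (2^(m-1-k))) \<in> carrier_mat (2^(m-1)) (2^(m-1))"
      using kron_carrier[OF X' one_carrier_mat, of "2^(m-1-k)"] by (simp only: e3)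
    have cY: "contr (2^(m-1)) (kron X (1\<^sub>m (2^(m-1-k))))"
      using kron_I_contr[OF X cX, of "2^(m-1-k)"] by (simp only: e3)
    have bY: "bnd (2^(m-1)) (kron X (1\<^sub>m (2^(m-1-k)))) (kron X' (1\<^sub>m (2^(m-1-k)))) C"
      using kron_I_bnd[OF X X' bX, of "2^(m-1-k)"] by (simp only: e3)
    show ?thesis
      using ctrl_contr[OF Y cY] ctrl_bnd[OF Y Y' bY C] by (simp only: e2)
  qed
  show ?thesis
  proof (cases q)
    case QPlain
    then show ?thesis unfolding embed_def
      using kron_I_contr[OF W cW, of "2^(m-k)"] kron_I_bnd[OF W W' bW, of "2^(m-k)"]
      by (simp only: e1 qkind.case)
  next
    case QInv
    then show ?thesis unfolding embed_def
      using kron_I_contr[OF Wa cWa, of "2^(m-k)"] kron_I_bnd[OF Wa Wa' bWa, of "2^(m-k)"]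
      by (simp only: e1 qkind.case)
  next
    case QCtrl
    then show ?thesis unfolding embed_def
      using ctrl[OF W W' cW bW] by (simp only: ctrlm_def qkind.case)
  next
    case QCtrlInv
    then show ?thesis unfolding embed_def
      using ctrl[OF Wa Wa' cWa bWa] by (simp only: ctrlm_def qkind.case)
  qed
qed

lemma embed_carrier:
  assumes km: "k + 1 \<le> m" and W: "W \<in> carrier_mat (2^k) (2^k)"
  shows "embed m k q W \<in> carrier_mat (2^m) (2^m)"
proof -
  have e1: "(2::nat)^k * 2^(m-k) = 2^m" using km by (simp add: power_add[symmetric])
  have e2: "2 * (2::nat)^(m-1) = 2^m" using km by (cases m) auto
  have e3: "(2::nat)^k * 2^(m-1-k) = 2^(m-1)" using km by (simp add: power_add[symmetric])
  have Wa: "adj W \<in> carrier_mat (2^k) (2^k)" using W by (rule adj_carrier)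
  have ctrl: "kron (basis_proj 2 0) (1\<^sub>m (2^(m-1))) + kron (basis_proj 2 1) (kron X (1\<^sub>m (2^(m-1-k))))
      \<in> carrier_mat (2^m) (2^m)" if X: "X \<in> carrier_mat (2^k) (2^k)" for X
  proof -
    have Y: "kron X (1\<^sub>m (2^(m-1-k))) \<in> carrier_mat (2^(m-1)) (2^(m-1))"
      using kron_carrier[OF X one_carrier_mat, of "2^(m-1-k)"] by (simp only: e3)
    have "kron (basis_proj 2 1) (kron X (1\<^sub>m (2^(m-1-k)))) \<in> carrier_mat (2^m) (2^m)"
      using kron_carrier[OF basis_proj_carrier[of 2 1] Y] by (simp only: e2)
    then show ?thesis by simp
  qed
  show ?thesis
  proof (cases q)
    case QPlain
    then show ?thesis unfolding embed_def
      using kron_carrier[OF W one_carrier_mat, of "2^(m-k)"] by (simp only: e1 qkind.case)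
  next
    case QInv
    then show ?thesis unfolding embed_def
      using kron_carrier[OF Wa one_carrier_mat, of "2^(m-k)"] by (simp only: e1 qkind.case)
  next
    case QCtrl
    then show ?thesis unfolding embed_def using ctrl[OF W] by (simp only: qkind.case)
  next
    case QCtrlInv
    then show ?thesis unfolding embed_def using ctrl[OF Wa] by (simp only: qkind.case)
  qed
qed

lemma adj_adj: "W \<in> carrier_mat d d \<Longrightarrow> adj (adj W) = W"
  unfolding adj_def by (intro eq_matI) auto

lemma contr_nrm: "contr N X \<Longrightarrow> nrm N (mv X u) \<le> nrm N u"
  unfolding contr_def nrm_def by (simp add: real_sqrt_le_mono)

lemma unitary_contr:
  assumes "is_unitary d W"
  shows "contr d W" "contr d (adj W)"
proof -
  have W: "W \<in> carrier_mat d d" and U1: "W * adj W = 1\<^sub>m d" and U2: "adj W * W = 1\<^sub>m d"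
    using assms unfolding is_unitary_def by auto
  show "contr d W" unfolding contr_def using unitary_nsq[OF W U2] by simp
  have "adj (adj W) * adj W = 1\<^sub>m d" using U1 adj_adj[OF W] by simp
  then show "contr d (adj W)" unfolding contr_def using unitary_nsq[OF adj_carrier[OF W]] by simp
qed

lemma bnd_refl: "0 \<le> C \<Longrightarrow> bnd d X X C"
  unfolding bnd_def nsq_def using nsq_nonneg by (simp add: mult_nonneg_nonneg nsq_def)

definition e0 :: "nat \<Rightarrow> complex" where "e0 = (\<lambda>j. if j = 0 then 1 else 0)"

lemma nsq_e0: "0 < N \<Longrightarrow> nsq N e0 = 1"
proof -
  assume N: "0 < N"
  have "nsq N e0 = (\<Sum>i<N. if i = 0 then 1 else 0)"
    unfolding nsq_def e0_def by (intro sum.cong) auto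
  also have "\<dots> = 1" using N by (simp add: sum.delta')
  finally show ?thesis .
qed

lemma mv_e0: "0 < dim_col M \<Longrightarrow> mv M e0 i = M $$ (i, 0)"
proof -
  assume N: "0 < dim_col M"
  have "mv M e0 i = (\<Sum>j<dim_col M. if j = 0 then M $$ (i, j) else 0)"
    unfolding mv_def e0_def by (intro sum.cong) auto
  also have "\<dots> = M $$ (i, 0)" using N by (simp add: sum.delta')
  finally show ?thesis .
qed

lemma hybrid:
  fixes R R' Uf Q Q' :: "nat \<Rightarrow> complex mat"
  assumes R0: "R 0 = Uf 0" "R' 0 = Uf 0"
  and RS: "\<And>t. R (Suc t) = Uf (Suc t) * Q t * R t" "\<And>t. R' (Suc t) = Uf (Suc t) * Q' t * R' t"
  and Uc: "\<And>t. t \<le> T \<Longrightarrow> Uf t \<in> carrier_mat N N \<and> contr N (Uf t)"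
  and Qc: "\<And>t. t < T \<Longrightarrow> Q t \<in> carrier_mat N N \<and> Q' t \<in> carrier_mat N N \<and> contr N (Q t) \<and> contr N (Q' t) \<and> bnd N (Q t) (Q' t) (\<delta>^2)"
  and d: "0 \<le> \<delta>" and N: "0 < N"
  shows "t \<le> T \<Longrightarrow> R t \<in> carrier_mat N N \<and> R' t \<in> carrier_mat N N \<and> nrm N (mv (R' t) e0) \<le> 1
          \<and> nrm N (\<lambda>i. mv (R t) e0 i - mv (R' t) e0 i) \<le> real t * \<delta>"
proof (induction t)
  case 0
  have U0: "Uf 0 \<in> carrier_mat N N" "contr N (Uf 0)" using Uc[of 0] by auto
  have "nrm N (mv (Uf 0) e0) \<le> nrm N e0" by (rule contr_nrm[OF U0(2)])
  also have "nrm N e0 = 1" using nsq_e0[OF N] by (simp add: nrm_def)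
  finally have a: "nrm N (mv (Uf 0) e0) \<le> 1" .
  have b: "nrm N (\<lambda>i. mv (Uf 0) e0 i - mv (Uf 0) e0 i) = 0" by (simp add: nrm_def nsq_def)
  show ?case using U0 a b R0 by simp
next
  case (Suc t)
  then have tT: "t \<le> T" "t < T" by auto
  note IH = Suc.IH[OF tT(1)]
  have Uc': "Uf (Suc t) \<in> carrier_mat N N" "contr N (Uf (Suc t))" using Uc[OF Suc.prems] by auto
  have Qt: "Q t \<in> carrier_mat N N" "Q' t \<in> carrier_mat N N" "contr N (Q t)" "contr N (Q' t)"
     "bnd N (Q t) (Q' t) (\<delta>^2)" using Qc[OF tT(2)] by auto
  have Rt: "R t \<in> carrier_mat N N" "R' t \<in> carrier_mat N N" using IH by auto
  define \<psi> where "\<psi> = mv (R t) e0"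
  define \<psi>' where "\<psi>' = mv (R' t) e0"
  have step: "mv (Uf (Suc t) * X * Y) e0 i = mv (Uf (Suc t)) (mv X (mv Y e0)) i"
    if X: "X \<in> carrier_mat N N" and Y: "Y \<in> carrier_mat N N" and i: "i < N" for X Y i
  proof -
    have "mv (Uf (Suc t) * X * Y) e0 i = mv (Uf (Suc t) * X) (mv Y e0) i"
      using X Y Uc' i by (intro mv_mult) auto
    also have "\<dots> = mv (Uf (Suc t)) (mv X (mv Y e0)) i"
      using X Y Uc' i by (intro mv_mult) auto
    finally show ?thesis .
  qed
  have C1: "R (Suc t) \<in> carrier_mat N N" "R' (Suc t) \<in> carrier_mat N N"
    unfolding RS using Uc' Qt Rt by auto
  have n1: "nrm N (mv (R' (Suc t)) e0) = nrm N (mv (Uf (Suc t)) (mv (Q' t) \<psi>'))"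
    unfolding RS \<psi>'_def by (intro nrm_cong step Qt Rt)
  have "nrm N (mv (Uf (Suc t)) (mv (Q' t) \<psi>')) \<le> nrm N (mv (Q' t) \<psi>')" by (rule contr_nrm[OF Uc'(2)])
  also have "\<dots> \<le> nrm N \<psi>'" by (rule contr_nrm[OF Qt(4)])
  also have "\<dots> \<le> 1" using IH \<psi>'_def by simp
  finally have A: "nrm N (mv (R' (Suc t)) e0) \<le> 1" using n1 by simp
  have "nrm N (\<lambda>i. mv (R (Suc t)) e0 i - mv (R' (Suc t)) e0 i)
      = nrm N (\<lambda>i. mv (Uf (Suc t)) (\<lambda>j. mv (Q t) \<psi> j - mv (Q' t) \<psi>' j) i)"
    unfolding RS \<psi>_def \<psi>'_def by (intro nrm_cong) (simp add: step Qt Rt mv_diff)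
  also have "\<dots> \<le> nrm N (\<lambda>j. mv (Q t) \<psi> j - mv (Q' t) \<psi>' j)" by (rule contr_nrm[OF Uc'(2)])
  also have "(\<lambda>j. mv (Q t) \<psi> j - mv (Q' t) \<psi>' j) = (\<lambda>j. mv (Q t) (\<lambda>k. \<psi> k - \<psi>' k) j + (mv (Q t) \<psi>' j - mv (Q' t) \<psi>' j))"
    by (simp add: mv_diff)
  also have "nrm N \<dots> \<le> nrm N (mv (Q t) (\<lambda>k. \<psi> k - \<psi>' k)) + nrm N (\<lambda>j. mv (Q t) \<psi>' j - mv (Q' t) \<psi>' j)"
    by (rule nrm_triangle)
  also have "\<dots> \<le> real t * \<delta> + \<delta> * 1"
  proof (rule add_mono)
    show "nrm N (mv (Q t) (\<lambda>k. \<psi> k - \<psi>' k)) \<le> real t * \<delta>"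
      using contr_nrm[OF Qt(3)] IH \<psi>_def \<psi>'_def by (meson order_trans)
    have "nrm N (\<lambda>j. mv (Q t) \<psi>' j - mv (Q' t) \<psi>' j) \<le> \<delta> * nrm N \<psi>'"
      using Qt(5) d unfolding bnd_def by (intro nsq_to_nrm) auto
    also have "\<dots> \<le> \<delta> * 1" using IH \<psi>'_def d by (intro mult_left_mono) auto
    finally show "nrm N (\<lambda>j. mv (Q t) \<psi>' j - mv (Q' t) \<psi>' j) \<le> \<delta> * 1" .
  qed
  also have "\<dots> = real (Suc t) * \<delta>" by (simp add: algebra_simps)
  finally show ?case using C1 A by simp
qed

lemma prob_diff:
  assumes S: "S \<subseteq> {..<N}"
  shows "(\<Sum>x\<in>S. (cmod (a x))^2) - (\<Sum>x\<in>S. (cmod (b x))^2) \<le> nrm N (\<lambda>i. a i - b i) * (nrm N a + nrm N b)"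
proof -
  have fS: "finite S" using S finite_subset by blast
  have "(\<Sum>x\<in>S. (cmod (a x))^2) - (\<Sum>x\<in>S. (cmod (b x))^2) = (\<Sum>x\<in>S. (cmod (a x) - cmod (b x)) * (cmod (a x) + cmod (b x)))"
    by (simp add: sum_subtractf[symmetric] power2_eq_square algebra_simps)
  also have "\<dots> \<le> (\<Sum>x\<in>S. cmod (a x - b x) * (cmod (a x) + cmod (b x)))"
    by (intro sum_mono mult_right_mono) (auto intro: norm_triangle_ineq2)
  also have "\<dots> \<le> (\<Sum>x<N. cmod (a x - b x) * (cmod (a x) + cmod (b x)))"
    by (rule sum_mono2) (auto simp: S)
  also have "\<dots> = (\<Sum>x<N. \<bar>cmod (a x - b x)\<bar> * \<bar>cmod (a x) + cmod (b x)\<bar>)" by simp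
  also have "\<dots> \<le> L2_set (\<lambda>x. cmod (a x - b x)) {..<N} * L2_set (\<lambda>x. cmod (a x) + cmod (b x)) {..<N}"
    by (rule L2_set_mult_ineq)
  also have "\<dots> \<le> nrm N (\<lambda>i. a i - b i) * (nrm N a + nrm N b)"
    unfolding nrm_L2 by (intro mult_left_mono L2_set_triangle_ineq L2_set_nonneg)
  finally show ?thesis .
qed

lemma nrm_le1_nsq: "nrm N b \<le> 1 \<Longrightarrow> nsq N b \<le> 1"
  unfolding nrm_def by simp

lemma distinguish:
  assumes a: "nrm N a \<le> 1" and b: "nrm N b \<le> 1"
  and G: "G1 \<subseteq> {..<N}" "G2 \<subseteq> {..<N}" "G1 \<inter> G2 = {}"
  and p1: "(\<Sum>x\<in>G1. (cmod (a x))^2) \<ge> 2/3" and p2: "(\<Sum>x\<in>G2. (cmod (b x))^2) \<ge> 2/3"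
  shows "1/6 \<le> nrm N (\<lambda>i. a i - b i)"
proof -
  have f: "finite G1" "finite G2" using G finite_subset by blast+
  have "(\<Sum>x\<in>G1. (cmod (b x))^2) + (\<Sum>x\<in>G2. (cmod (b x))^2) = (\<Sum>x\<in>G1 \<union> G2. (cmod (b x))^2)"
    using f G by (simp add: sum.union_disjoint)
  also have "\<dots> \<le> nsq N b" unfolding nsq_def by (rule sum_mono2) (use G in auto)
  also have "\<dots> \<le> 1" using b by (rule nrm_le1_nsq)
  finally have q: "(\<Sum>x\<in>G1. (cmod (b x))^2) \<le> 1/3" using p2 by simp
  have "1/3 \<le> (\<Sum>x\<in>G1. (cmod (a x))^2) - (\<Sum>x\<in>G1. (cmod (b x))^2)" using p1 q by simp
  also have "\<dots> \<le> nrm N (\<lambda>i. a i - b i) * (nrm N a + nrm N b)" by (rule prob_diff[OF G(1)])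
  also have "\<dots> \<le> nrm N (\<lambda>i. a i - b i) * 2" using a b nrm_nonneg by (intro mult_left_mono) auto
  finally show ?thesis by simp
qed


lemma sum_supp1:
  fixes N :: nat
  assumes "i < N" "\<And>j. j < N \<Longrightarrow> j \<noteq> i \<Longrightarrow> f j = 0"
  shows "(\<Sum>j<N. f j) = f i"
proof -
  have "(\<Sum>j<N. f j) = (\<Sum>j\<in>{i}. f j)"
    using assms by (intro sum.mono_neutral_right) auto
  then show ?thesis by simp
qed

lemma sum_supp2:
  fixes N :: nat
  assumes "0 < m" "m < N" "\<And>j. j < N \<Longrightarrow> j \<noteq> 0 \<Longrightarrow> j \<noteq> m \<Longrightarrow> f j = 0"
  shows "(\<Sum>j<N. f j) = f 0 + f m"
proof -
  have "(\<Sum>j<N. f j) = (\<Sum>j\<in>{0,m}. f j)"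
    using assms by (intro sum.mono_neutral_right) auto
  then show ?thesis using assms by simp
qed

definition rot :: "nat \<Rightarrow> nat \<Rightarrow> real \<Rightarrow> real \<Rightarrow> complex mat" where
  "rot N m c s = mat N N (\<lambda>(i,j). if i = j then (if i = 0 \<or> i = m then complex_of_real c else 1)
      else if i = m \<and> j = 0 then complex_of_real s else if i = 0 \<and> j = m then - complex_of_real s else 0)"

lemma rot_carrier: "rot N m c s \<in> carrier_mat N N"
  unfolding rot_def by simp

lemma rot_entry: "i < N \<Longrightarrow> j < N \<Longrightarrow> rot N m c s $$ (i,j) = (if i = j then (if i = 0 \<or> i = m then complex_of_real c else 1)
      else if i = m \<and> j = 0 then complex_of_real s else if i = 0 \<and> j = m then - complex_of_real s else 0)"
  unfolding rot_def by simp

lemma rot_mv: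
  assumes m: "0 < m" "m < N" and i: "i < N"
  shows "mv (rot N m c s) u i = (if i = 0 then c * u 0 - s * u m else if i = m then s * u 0 + c * u m else u i)"
proof -
  have dc: "dim_col (rot N m c s) = N" by (simp add: rot_def)
  show ?thesis
  proof (cases "i = 0 \<or> i = m")
    case True
    have "mv (rot N m c s) u i = rot N m c s $$ (i,0) * u 0 + rot N m c s $$ (i,m) * u m"
      unfolding mv_def dc using m i True by (intro sum_supp2) (auto simp: rot_entry)
    then show ?thesis using m i True by (auto simp: rot_entry)
  next
    case False
    have "mv (rot N m c s) u i = rot N m c s $$ (i,i) * u i"
      unfolding mv_def dc using m i False by (intro sum_supp1) (auto simp: rot_entry)
    then show ?thesis using m i False by (auto simp: rot_entry)
  qed
qed

lemma rot_adj: "adj (rot N m c s) = rot N m c (-s)"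
  unfolding adj_def by (intro eq_matI) (auto simp: rot_def)

lemma rot_mult_gen:
  assumes m: "0 < m" "m < N" and cs: "c^2 + s^2 = 1" and ss: "s' = - s \<or> s = - s'"
  shows "rot N m c s' * rot N m c s = 1\<^sub>m N"
proof (rule eq_matI)
  have cs': "complex_of_real c * complex_of_real c + complex_of_real s * complex_of_real s = 1"
    by (metis cs of_real_add of_real_mult of_real_1 power2_eq_square)
  fix i j assume "i < dim_row (1\<^sub>m N)" "j < dim_col (1\<^sub>m N)"
  then have i: "i < N" and j: "j < N" by auto
  have "(rot N m c s' * rot N m c s) $$ (i,j) = mv (rot N m c s') (\<lambda>k. rot N m c s $$ (k,j)) i"
    using i j by (intro mult_entry_mv) (auto simp: rot_def)
  also have "\<dots> = (if i = 0 then c * rot N m c s $$ (0,j) - s' * rot N m c s $$ (m,j)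
      else if i = m then s' * rot N m c s $$ (0,j) + c * rot N m c s $$ (m,j) else rot N m c s $$ (i,j))"
    by (rule rot_mv[OF m i])
  also have "\<dots> = 1\<^sub>m N $$ (i,j)"
    using i j m cs' ss by (auto simp: rot_entry algebra_simps)
  finally show "(rot N m c s' * rot N m c s) $$ (i,j) = 1\<^sub>m N $$ (i,j)" .
qed (auto simp: rot_def)

lemma rot_unitary:
  assumes m: "0 < m" "m < N" and cs: "c^2 + s^2 = 1"
  shows "is_unitary N (rot N m c s)"
proof -
  have 1: "rot N m c (-s) * rot N m c s = 1\<^sub>m N" by (rule rot_mult_gen[OF m cs]) simp
  have cs2: "c^2 + (-s)^2 = 1" using cs by simp
  have 2: "rot N m c s * rot N m c (-s) = 1\<^sub>m N" by (rule rot_mult_gen[OF m cs2]) simp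
  show ?thesis unfolding is_unitary_def rot_adj using rot_carrier 1 2 by auto
qed

lemma cmod_rot_id:
  fixes \<alpha> \<beta> :: real and x y :: complex
  shows "(cmod (\<alpha> * x - \<beta> * y))^2 + (cmod (\<beta> * x + \<alpha> * y))^2 = (\<alpha>^2 + \<beta>^2) * ((cmod x)^2 + (cmod y)^2)"
  unfolding cmod_power2 by (simp add: power2_eq_square algebra_simps)

lemma rot_bnd:
  assumes m: "0 < m" "m < N"
  shows "bnd N (rot N m c s) (rot N m c' s') ((c-c')^2 + (s-s')^2)"
  unfolding bnd_def
proof
  fix u :: "nat \<Rightarrow> complex"
  let ?a = "c - c'" and ?b = "s - s'"
  have "nsq N (\<lambda>i. mv (rot N m c s) u i - mv (rot N m c' s') u i)
     = (cmod (?a * u 0 - ?b * u m))^2 + (cmod (?b * u 0 + ?a * u m))^2"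
  proof -
    have "nsq N (\<lambda>i. mv (rot N m c s) u i - mv (rot N m c' s') u i)
      = (cmod (mv (rot N m c s) u 0 - mv (rot N m c' s') u 0))^2 + (cmod (mv (rot N m c s) u m - mv (rot N m c' s') u m))^2"
      unfolding nsq_def using m by (intro sum_supp2) (auto simp: rot_mv)
    also have "\<dots> = (cmod (?a * u 0 - ?b * u m))^2 + (cmod (?b * u 0 + ?a * u m))^2"
      using m by (simp add: rot_mv algebra_simps)
    finally show ?thesis .
  qed
  also have "\<dots> = (?a^2 + ?b^2) * ((cmod (u 0))^2 + (cmod (u m))^2)" by (rule cmod_rot_id)
  also have "(cmod (u 0))^2 + (cmod (u m))^2 \<le> nsq N u"
  proof -
    have "(cmod (u 0))^2 + (cmod (u m))^2 = (\<Sum>i\<in>{0,m}. (cmod (u i))^2)" using m by simp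
    also have "\<dots> \<le> nsq N u" unfolding nsq_def using m by (intro sum_mono2) auto
    finally show ?thesis .
  qed
  then have "(?a^2 + ?b^2) * ((cmod (u 0))^2 + (cmod (u m))^2) \<le> (?a^2 + ?b^2) * nsq N u"
    by (intro mult_left_mono) auto
  finally show "nsq N (\<lambda>i. mv (rot N m c s) u i - mv (rot N m c' s') u i) \<le> ((c-c')^2 + (s-s')^2) * nsq N u" .
qed

lemma outer_entry:
  assumes W: "W \<in> carrier_mat N N" and N: "0 < N" and i: "i < N" and j: "j < N"
  shows "(W * basis_proj N 0 * adj W) $$ (i,j) = W $$ (i,0) * cnj (W $$ (j,0))"
proof -
  have WP: "W * basis_proj N 0 \<in> carrier_mat N N" using W basis_proj_carrier by auto
  have e1: "(W * basis_proj N 0) $$ (i,l) = (if l = 0 then W $$ (i,0) else 0)" if l: "l < N" for l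
  proof -
    have "(W * basis_proj N 0) $$ (i,l) = mv W (\<lambda>k. basis_proj N 0 $$ (k,l)) i"
      using W i l by (intro mult_entry_mv) (auto simp: basis_proj_def)
    also have "\<dots> = W $$ (i,0) * basis_proj N 0 $$ (0,l)"
      unfolding mv_def using W N l by (subst sum_supp1[of 0]) (auto simp: bp_entry)
    also have "\<dots> = (if l = 0 then W $$ (i,0) else 0)" using N l by (simp add: bp_entry)
    finally show ?thesis .
  qed
  have "(W * basis_proj N 0 * adj W) $$ (i,j) = mv (W * basis_proj N 0) (\<lambda>l. adj W $$ (l,j)) i"
    using W i j WP by (intro mult_entry_mv) (auto simp: adj_def)
  also have "\<dots> = (W * basis_proj N 0) $$ (i,0) * adj W $$ (0,j)"
    unfolding mv_def using WP N by (subst sum_supp1[of 0]) (auto simp: e1)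
  also have "\<dots> = W $$ (i,0) * cnj (W $$ (j,0))" using W N j by (simp add: e1 adj_def)
  finally show ?thesis .
qed

definition diag2 :: "real \<Rightarrow> real \<Rightarrow> complex mat" where
  "diag2 x y = mat 2 2 (\<lambda>(i,j). if i = j then (if i = 0 then complex_of_real x else complex_of_real y) else 0)"

lemma rot_prepares:
  assumes a: "1 \<le> a" and cs: "c^2 + s^2 = 1"
  shows "prepares 1 a (rot (2^(1+a)) (2^a+1) c s) (diag2 (c^2) (s^2))"
proof -
  let ?R = "(2::nat)^a" let ?N = "(2::nat)^(1+a)" let ?m = "?R + 1" let ?W = "rot ?N ?m c s"
  have R2: "2 \<le> ?R" using a by (metis one_le_numeral power_increasing power_one_right)
  have N: "?N = 2 * ?R" by simp
  have m: "0 < ?m" "?m < ?N" using R2 by auto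
  have col: "?W $$ (x,0) = (if x = 0 then complex_of_real c else if x = ?m then complex_of_real s else 0)" if "x < ?N" for x
    using that m by (simp add: rot_entry)
  have M: "(?W * basis_proj ?N 0 * adj ?W) $$ (x,y) = ?W $$ (x,0) * cnj (?W $$ (y,0))" if "x < ?N" "y < ?N" for x y
    using that by (intro outer_entry rot_carrier) auto
  have P: "ptrace2 2 ?R (?W * basis_proj ?N 0 * adj ?W) = diag2 (c^2) (s^2)"
  proof (rule eq_matI)
    fix i j assume "i < dim_row (diag2 (c^2) (s^2))" "j < dim_col (diag2 (c^2) (s^2))"
    then have i: "i < 2" and j: "j < 2" by (auto simp: diag2_def)
    have lt: "i * ?R + k < ?N" "j * ?R + k < ?N" if "k < ?R" for k
      using that i j by (auto simp: N intro: blk_lt)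
    have "ptrace2 2 ?R (?W * basis_proj ?N 0 * adj ?W) $$ (i,j)
        = (\<Sum>k<?R. (?W * basis_proj ?N 0 * adj ?W) $$ (i*?R + k, j*?R + k))"
      unfolding ptrace2_def by (simp only: index_mat[OF i j] case_prod_conv)
    also have "\<dots> = (\<Sum>k<?R. ?W $$ (i*?R + k, 0) * cnj (?W $$ (j*?R + k, 0)))"
      by (intro sum.cong refl, rule M) (use i j in \<open>auto intro!: blk_lt\<close>)
    also have "\<dots> = diag2 (c^2) (s^2) $$ (i,j)"
    proof -
      consider "i = 0" "j = 0" | "i = 0" "j = 1" | "i = 1" "j = 0" | "i = 1" "j = 1" using i j by linarith
      then show ?thesis
      proof cases
        case 1
        have "(\<Sum>k<?R. ?W $$ (i*?R + k, 0) * cnj (?W $$ (j*?R + k, 0))) = ?W $$ (0,0) * cnj (?W $$ (0,0))"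
          using 1 R2 by (subst sum_supp1[of 0]) (auto simp: rot_entry)
        then show ?thesis using 1 m by (simp add: rot_entry diag2_def power2_eq_square)
      next
        case 2
        have "(\<Sum>k<?R. ?W $$ (i*?R + k, 0) * cnj (?W $$ (j*?R + k, 0))) = 0"
          using 2 R2 by (intro sum.neutral) (auto simp: rot_entry)
        then show ?thesis using 2 by (simp add: diag2_def)
      next
        case 3
        have "(\<Sum>k<?R. ?W $$ (i*?R + k, 0) * cnj (?W $$ (j*?R + k, 0))) = 0"
          using 3 R2 by (intro sum.neutral) (auto simp: rot_entry)
        then show ?thesis using 3 by (simp add: diag2_def)
      next
        case 4
        have "(\<Sum>k<?R. ?W $$ (i*?R + k, 0) * cnj (?W $$ (j*?R + k, 0))) = ?W $$ (?m,0) * cnj (?W $$ (?m,0))"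
          using 4 R2 by (subst sum_supp1[of 1]) (auto simp: rot_entry)
        then show ?thesis using 4 m by (simp add: rot_entry diag2_def power2_eq_square)
      qed
    qed
    finally show "ptrace2 2 ?R (?W * basis_proj ?N 0 * adj ?W) $$ (i,j) = diag2 (c^2) (s^2) $$ (i,j)" .
  qed (auto simp: ptrace2_def diag2_def)
  show ?thesis unfolding prepares_def using rot_unitary[OF m cs] P by simp
qed


lemma diag2_carrier: "diag2 x y \<in> carrier_mat 2 2"
  unfolding diag2_def by simp

lemma diag2_entry: "i < 2 \<Longrightarrow> j < 2 \<Longrightarrow> diag2 x y $$ (i,j) = (if i = j then (if i = 0 then complex_of_real x else complex_of_real y) else 0)"
  unfolding diag2_def by simp

lemma qf2: "(\<Sum>i<2. \<Sum>j<2. cnj (v i) * B $$ (i,j) * v j) =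
   cnj (v 0) * B$$(0,0) * v 0 + cnj (v 0) * B$$(0,1) * v 1 + cnj (v 1) * B$$(1,0) * v 0 + cnj (v 1) * B$$(1,1) * v 1"
  by (simp add: sum_2)

lemma prod2:
  assumes "A \<in> carrier_mat 2 2" "B \<in> carrier_mat 2 2" "i < 2" "j < 2"
  shows "(A*B)$$(i,j) = A$$(i,0)*B$$(0,j) + A$$(i,1)*B$$(1,j)"
  using assms by (simp add: scalar_prod_def atLeast0LessThan sum_2)

lemma re_qf: "Re (cnj z * complex_of_real x * z) = x * (cmod z)^2"
  unfolding cmod_power2 by (simp add: power2_eq_square algebra_simps)

lemma psd_diag2: assumes "0 \<le> x" "0 \<le> y" shows "psd 2 (diag2 x y)"
  unfolding psd_def
proof (intro conjI allI)
  show "diag2 x y \<in> carrier_mat 2 2" by (rule diag2_carrier)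
  show "adj (diag2 x y) = diag2 x y" unfolding adj_def diag2_def by (intro eq_matI) auto
  fix v :: "nat \<Rightarrow> complex"
  have "(\<Sum>i<2. \<Sum>j<2. cnj (v i) * diag2 x y $$ (i,j) * v j) = cnj (v 0) * complex_of_real x * v 0 + cnj (v 1) * complex_of_real y * v 1"
    unfolding qf2 by (simp add: diag2_entry)
  then have "Re (\<Sum>i<2. \<Sum>j<2. cnj (v i) * diag2 x y $$ (i,j) * v j) = x * (cmod (v 0))^2 + y * (cmod (v 1))^2"
    by (simp only: plus_complex.sel re_qf)
  then show "0 \<le> Re (\<Sum>i<2. \<Sum>j<2. cnj (v i) * diag2 x y $$ (i,j) * v j)"
    using assms by (metis add_nonneg_nonneg mult_nonneg_nonneg zero_le_power2)
qed

lemma mtrace_diag2: "mtrace (diag2 x y) = complex_of_real (x + y)"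
  unfolding mtrace_def by (simp add: diag2_def sum_2)

lemma density_diag2: "0 \<le> x \<Longrightarrow> 0 \<le> y \<Longrightarrow> x + y = 1 \<Longrightarrow> density 2 (diag2 x y)"
  unfolding density_def by (simp add: psd_diag2 mtrace_diag2)

lemma loewner_diag2:
  assumes "0 < k" "1/k \<le> x" "1/k \<le> y"
  shows "loewner_ge 2 (diag2 x y) ((1 / complex_of_real k) \<cdot>\<^sub>m 1\<^sub>m 2)"
proof -
  have e: "diag2 x y - (1 / complex_of_real k) \<cdot>\<^sub>m 1\<^sub>m 2 = diag2 (x - 1/k) (y - 1/k)"
    by (intro eq_matI) (auto simp: diag2_def)
  show ?thesis unfolding loewner_ge_def e using assms
    by (auto simp: diag2_carrier intro!: psd_diag2)
qed

lemma diag2_mult: "diag2 a b * diag2 c d = diag2 (a*c) (b*d)"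
proof (rule eq_matI)
  fix i j assume "i < dim_row (diag2 (a*c) (b*d))" "j < dim_col (diag2 (a*c) (b*d))"
  then have i: "i < 2" and j: "j < 2" by (auto simp: diag2_def)
  then consider "i = 0" "j = 0" | "i = 0" "j = 1" | "i = 1" "j = 0" | "i = 1" "j = 1" by linarith
  then show "(diag2 a b * diag2 c d) $$ (i,j) = diag2 (a*c) (b*d) $$ (i,j)"
    unfolding prod2[OF diag2_carrier diag2_carrier i j]
    by cases (simp_all add: diag2_entry)
qed (auto simp: diag2_def)

lemma psd_sqrt_unique:
  assumes B: "psd 2 B" and sq: "B * B = diag2 x y" and x: "0 \<le> x" and y: "0 \<le> y"
  shows "B = diag2 (sqrt x) (sqrt y)"
proof -
  have Bc: "B \<in> carrier_mat 2 2" and H: "adj B = B"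
    and F: "\<And>v. 0 \<le> Re (\<Sum>i<2. \<Sum>j<2. cnj (v i) * B $$ (i,j) * v j)"
    using B unfolding psd_def by auto
  have herm: "cnj (B $$ (j,i)) = B $$ (i,j)" if "i < 2" "j < 2" for i j
  proof -
    have "adj B $$ (i,j) = cnj (B $$ (j,i))" using Bc that by (simp add: adj_def)
    then show ?thesis using H by simp
  qed
  define a where "a = B $$ (0,0)"
  define b where "b = B $$ (0,1)"
  define d where "d = B $$ (1,1)"
  have b10: "B $$ (1,0) = cnj b" using herm[of 1 0] by (simp add: b_def)
  have ar: "a = complex_of_real (Re a)" using herm[of 0 0] unfolding a_def
    by (metis Reals_cnj_iff complex_is_Real_iff of_real_Re zero_less_numeral)
  have dr: "d = complex_of_real (Re d)" using herm[of 1 1] unfolding d_def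
    by (metis Reals_cnj_iff complex_is_Real_iff of_real_Re one_less_numeral_iff semiring_norm(76))
  have a0: "0 \<le> Re a"
    using F[of "\<lambda>k. if k = 0 then 1 else 0"] unfolding qf2 by (simp add: a_def)
  have d0: "0 \<le> Re d"
    using F[of "\<lambda>k. if k = 1 then 1 else 0"] unfolding qf2 by (simp add: d_def)
  have p: "diag2 x y $$ (i,j) = B$$(i,0)*B$$(0,j) + B$$(i,1)*B$$(1,j)" if "i < 2" "j < 2" for i j
    using prod2[OF Bc Bc that] sq by simp
  have s01: "a * b + b * d = 0"
    using p[of 0 1, unfolded a_def[symmetric] b_def[symmetric] d_def[symmetric]] by (simp add: diag2_entry)
  have s00: "a * a + b * cnj b = complex_of_real x"
    using p[of 0 0, unfolded a_def[symmetric] b_def[symmetric] b10] by (simp add: diag2_entry)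
  have s11: "cnj b * b + d * d = complex_of_real y"
    using p[of 1 1, unfolded d_def[symmetric] b_def[symmetric] b10] by (simp add: diag2_entry)
  have F2: "0 \<le> Re (cnj v0 * a * v0 + cnj v0 * b * v1 + cnj v1 * cnj b * v0 + cnj v1 * d * v1)" for v0 v1
    using F[of "\<lambda>k. if k = 0 then v0 else v1", unfolded qf2 a_def[symmetric] b_def[symmetric] d_def[symmetric] b10]
    by simp
  have b0: "b = 0"
  proof (rule ccontr)
    assume bn: "b \<noteq> 0"
    have "b * (a + d) = 0" using s01 by (simp add: distrib_left mult.commute)
    then have "a + d = 0" using bn by simp
    then have "Re a + Re d = 0" by (metis plus_complex.sel(1) zero_complex.sel(1))
    then have "Re a = 0" "Re d = 0" using a0 d0 by auto
    then have az: "a = 0" "d = 0" using ar dr by auto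
    have "0 \<le> Re (cnj 1 * a * 1 + cnj 1 * b * (- cnj b) + cnj (- cnj b) * cnj b * 1 + cnj (- cnj b) * d * (- cnj b))"
      by (rule F2)
    also have "\<dots> = - 2 * (cmod b)^2"
      using az unfolding cmod_power2 by (simp add: power2_eq_square algebra_simps)
    finally have "(cmod b)^2 \<le> 0" by simp
    then show False using bn by simp
  qed
  have "Re a * Re a = x" using s00 b0 ar
    by (metis add.right_neutral mult_zero_left of_real_eq_iff of_real_mult)
  then have "Re a = sqrt x" using a0 x by (metis real_sqrt_abs power2_eq_square abs_of_nonneg)
  then have aa: "a = complex_of_real (sqrt x)" using ar by simp
  have "Re d * Re d = y" using s11 b0 dr
    by (metis add_0 mult_zero_right complex_cnj_zero of_real_eq_iff of_real_mult)
  then have "Re d = sqrt y" using d0 y by (metis real_sqrt_abs power2_eq_square abs_of_nonneg)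
  then have dd: "d = complex_of_real (sqrt y)" using dr by simp
  show ?thesis
  proof (rule eq_matI)
    fix i j assume "i < dim_row (diag2 (sqrt x) (sqrt y))" "j < dim_col (diag2 (sqrt x) (sqrt y))"
    then have i: "i < 2" and j: "j < 2" by (auto simp: diag2_def)
    have e: "B $$ (0,0) = complex_of_real (sqrt x)" "B $$ (0,1) = 0" "B $$ (1,0) = 0"
      "B $$ (1,1) = complex_of_real (sqrt y)"
      using aa dd b0 b10 unfolding a_def b_def d_def by auto
    consider "i = 0" "j = 0" | "i = 0" "j = 1" | "i = 1" "j = 0" | "i = 1" "j = 1" using i j by linarith
    then show "B $$ (i,j) = diag2 (sqrt x) (sqrt y) $$ (i,j)"
      by cases (use e in \<open>simp_all add: diag2_entry\<close>)
  qed (use Bc in \<open>auto simp: diag2_def\<close>)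
qed

lemma msqrt_diag2:
  assumes "0 \<le> x" "0 \<le> y"
  shows "msqrt 2 (diag2 x y) = diag2 (sqrt x) (sqrt y)"
  unfolding msqrt_def
proof (rule the_equality)
  show "psd 2 (diag2 (sqrt x) (sqrt y)) \<and> diag2 (sqrt x) (sqrt y) * diag2 (sqrt x) (sqrt y) = diag2 x y"
    using assms by (simp add: psd_diag2 diag2_mult)
  show "\<And>B. psd 2 B \<and> B * B = diag2 x y \<Longrightarrow> B = diag2 (sqrt x) (sqrt y)"
    using psd_sqrt_unique assms by blast
qed

lemma sqrt_sand: "0 \<le> q \<Longrightarrow> sqrt q * p * sqrt q = q * p"
proof -
  assume q: "0 \<le> q"
  have "sqrt q * p * sqrt q = (sqrt q * sqrt q) * p" by (simp add: mult_ac)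
  then show ?thesis using q by simp
qed

lemma fidelity_diag2:
  assumes "0 \<le> p1" "0 \<le> p2" "0 \<le> q1" "0 \<le> q2"
  shows "fidelity 2 (diag2 p1 p2) (diag2 q1 q2) = sqrt (q1 * p1) + sqrt (q2 * p2)"
proof -
  have "msqrt 2 (diag2 q1 q2) * diag2 p1 p2 * msqrt 2 (diag2 q1 q2) = diag2 (q1 * p1) (q2 * p2)"
    using assms by (simp add: msqrt_diag2 diag2_mult sqrt_sand)
  then show ?thesis unfolding fidelity_def using assms
    by (simp add: msqrt_diag2 mtrace_diag2)
qed


lemma bnd_mono: "bnd N X Y C \<Longrightarrow> C \<le> C' \<Longrightarrow> bnd N X Y C'"
  unfolding bnd_def by (meson mult_right_mono nsq_nonneg order_trans)

lemma query_props:
  assumes ws: "n + max a1 a2 + 1 \<le> ws A"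
  and Or: "is_unitary (2^(n+a1)) Or" and Os: "is_unitary (2^(n+a2)) Os" and Os': "is_unitary (2^(n+a2)) Os'"
  and b: "bnd (2^(n+a2)) Os Os' C" and ba: "bnd (2^(n+a2)) (adj Os) (adj Os') C" and C: "0 \<le> C"
  shows "query_op A n a1 a2 Or Os t \<in> carrier_mat (2^ws A) (2^ws A) \<and> query_op A n a1 a2 Or Os' t \<in> carrier_mat (2^ws A) (2^ws A)
    \<and> contr (2^ws A) (query_op A n a1 a2 Or Os t) \<and> contr (2^ws A) (query_op A n a1 a2 Or Os' t)
    \<and> bnd (2^ws A) (query_op A n a1 a2 Or Os t) (query_op A n a1 a2 Or Os' t) C"
proof -
  have k1: "n + a1 + 1 \<le> ws A" and k2: "n + a2 + 1 \<le> ws A" using ws by auto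
  have Orc: "Or \<in> carrier_mat (2^(n+a1)) (2^(n+a1))" using Or unfolding is_unitary_def by auto
  have Osc: "Os \<in> carrier_mat (2^(n+a2)) (2^(n+a2))" using Os unfolding is_unitary_def by auto
  have Osc': "Os' \<in> carrier_mat (2^(n+a2)) (2^(n+a2))" using Os' unfolding is_unitary_def by auto
  obtain bb q where qq: "qry A t = (bb, q)" by fastforce
  show ?thesis
  proof (cases bb)
    case True
    have "contr (2^ws A) (embed (ws A) (n+a1) q Or)"
      using embed_props[OF k1 Orc Orc unitary_contr[OF Or] bnd_refl[OF C] bnd_refl[OF C] C] by blast
    then show ?thesis unfolding query_op_def qq using True embed_carrier[OF k1 Orc] bnd_refl[OF C] by simp
  next
    case False
    have "contr (2^ws A) (embed (ws A) (n+a2) q Os) \<and> bnd (2^ws A) (embed (ws A) (n+a2) q Os) (embed (ws A) (n+a2) q Os') C"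
      using embed_props[OF k2 Osc Osc' unitary_contr[OF Os] b ba C] by blast
    moreover have "contr (2^ws A) (embed (ws A) (n+a2) q Os')"
      using embed_props[OF k2 Osc' Osc' unitary_contr[OF Os'] bnd_refl[OF C] bnd_refl[OF C] C] by blast
    ultimately show ?thesis unfolding query_op_def qq
      using False embed_carrier[OF k2 Osc] embed_carrier[OF k2 Osc'] by simp
  qed
qed

definition cp :: "real \<Rightarrow> real" where "cp t = (1 - t^2) / (1 + t^2)"
definition sp :: "real \<Rightarrow> real" where "sp t = 2 * t / (1 + t^2)"

lemma pos_den: "0 < 1 + (t::real)^2"
  by (simp add: add_pos_nonneg)

lemma cp_sp: "(cp t)^2 + (sp t)^2 = 1"
proof -
  have d: "1 + t^2 \<noteq> 0" using pos_den[of t] by simp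
  have e: "(1 - t^2)^2 + (2*t)^2 = (1 + t^2)^2" by (simp add: power2_eq_square algebra_simps)
  have "(cp t)^2 + (sp t)^2 = ((1 - t^2)^2 + (2*t)^2) / (1 + t^2)^2"
    unfolding cp_def sp_def power_divide add_divide_distrib by simp
  also have "\<dots> = 1" unfolding e using d by simp
  finally show ?thesis .
qed

lemma cp_nonneg: "0 \<le> t \<Longrightarrow> t \<le> 1 \<Longrightarrow> 0 \<le> cp t"
  unfolding cp_def using pos_den[of t] by (intro divide_nonneg_pos) (auto simp: power_le_one)

lemma sp_nonneg: "0 \<le> t \<Longrightarrow> 0 \<le> sp t"
  unfolding sp_def using pos_den[of t] by simp

lemma cp_lb: assumes "0 \<le> t" "t \<le> 4/5" shows "1/100 \<le> (cp t)^2"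
proof -
  have "t * t \<le> 4/5 * (4/5)" using assms by (intro mult_mono) auto
  then have "1/10 \<le> cp t" unfolding cp_def using pos_den[of t]
    by (simp add: divide_simps power2_eq_square)
  then have "(1/10)^2 \<le> (cp t)^2" by (intro power_mono) auto
  then show ?thesis by (simp add: power2_eq_square)
qed

lemma sp_lb: assumes "1/10 \<le> t" "t \<le> 1" shows "1/100 \<le> (sp t)^2"
proof -
  have tt: "t * t \<le> t * 1" using assms by (intro mult_left_mono) auto
  have "1/10 \<le> sp t" unfolding sp_def using pos_den[of t] assms
    by (simp add: divide_simps power2_eq_square) (use tt in linarith)
  then have "(1/10)^2 \<le> (sp t)^2" by (intro power_mono) auto
  then show ?thesis by (simp add: power2_eq_square)
qed

lemma dist_id: "(cp a - cp b)^2 + (sp a - sp b)^2 = 4 * (a - b)^2 / ((1 + a^2) * (1 + b^2))"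
proof -
  define Da where "Da = 1 + a^2"
  define Db where "Db = 1 + b^2"
  have d: "Da \<noteq> 0" "Db \<noteq> 0" using pos_den[of a] pos_den[of b] by (auto simp: Da_def Db_def)
  have c: "cp a - cp b = ((1 - a^2) * Db - (1 - b^2) * Da) / (Da * Db)"
    unfolding cp_def Da_def[symmetric] Db_def[symmetric] using d by (simp add: diff_frac_eq)
  have s: "sp a - sp b = ((2*a) * Db - (2*b) * Da) / (Da * Db)"
    unfolding sp_def Da_def[symmetric] Db_def[symmetric] using d by (simp add: diff_frac_eq)
  have poly: "((1 - a^2) * Db - (1 - b^2) * Da)^2 + ((2*a) * Db - (2*b) * Da)^2 = (4 * (a - b)^2) * (Da * Db)"
    unfolding Da_def Db_def by (simp add: power2_eq_square algebra_simps)
  have "(cp a - cp b)^2 + (sp a - sp b)^2 = (((1 - a^2) * Db - (1 - b^2) * Da)^2 + ((2*a) * Db - (2*b) * Da)^2) / (Da * Db)^2"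
    unfolding c s power_divide add_divide_distrib by simp
  also have "\<dots> = (4 * (a - b)^2) * (Da * Db) / ((Da * Db) * (Da * Db))"
    unfolding poly by (simp add: power2_eq_square)
  also have "\<dots> = 4 * (a - b)^2 / (Da * Db)"
    using d by simp
  finally show ?thesis by (simp add: Da_def Db_def)
qed

lemma dist_le: "(cp a - cp b)^2 + (sp a - sp b)^2 \<le> (2 * (b - a))^2"
proof -
  have D: "1 \<le> (1 + a^2) * (1 + b^2)" using pos_den[of a] pos_den[of b]
    using mult_mono[of 1 "1 + a^2" 1 "1 + b^2"] by simp
  have "4 * (a - b)^2 / ((1 + a^2) * (1 + b^2)) \<le> 4 * (a - b)^2 / 1"
    using D by (intro divide_left_mono) auto
  also have "\<dots> = (2 * (b - a))^2" by (simp add: power2_eq_square algebra_simps)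
  finally show ?thesis by (simp add: dist_id)
qed


definition Fv :: "real \<Rightarrow> real" where "Fv t = cp (1/10) * cp t + sp (1/10) * sp t"

lemma cr_val: "cp (1/10) = 99/101" by (simp add: cp_def power2_eq_square)
lemma sr_val: "sp (1/10) = 20/101" by (simp add: sp_def power2_eq_square)

lemma Fv_eq: "Fv t = (99 * (1 - t^2) + 40 * t) / (101 * (1 + t^2))"
proof -
  have gen: "99/101 * ((1 - t^2) / u) + 20/101 * (2 * t / u) = (99 * (1 - t^2) + 40 * t) / (101 * u)"
    if "u \<noteq> 0" for u :: real using that by (simp add: field_simps)
  have d: "1 + t^2 \<noteq> 0" using pos_den[of t] by simp
  show ?thesis unfolding Fv_def cr_val sr_val unfolding cp_def sp_def using gen[OF d] .
qed

lemma gap_eq: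
  "Fv (1/5) - Fv (1/5 + h) = (h * (204/5 + 206 * h)) / (101 * (26/25) * (1 + (1/5 + h)^2))"
proof -
  have d: "101 * (1 + (1/5 + h)^2) \<noteq> 0" using pos_den[of "1/5 + h"] by simp
  have "Fv (1/5) - Fv (1/5 + h) = ((99 * (1 - (1/5)^2) + 40 * (1/5)) * (101 * (1 + (1/5 + h)^2))
       - (99 * (1 - (1/5 + h)^2) + 40 * (1/5 + h)) * (101 * (1 + (1/5)^2))) / ((101 * (1 + (1/5)^2)) * (101 * (1 + (1/5 + h)^2)))"
    unfolding Fv_eq using d by (subst diff_frac_eq) (auto simp: power2_eq_square)
  also have "\<dots> = (h * (204/5 + 206 * h) * 101) / ((101 * (26/25)) * (101 * (1 + (1/5 + h)^2)))"
    by (simp add: power2_eq_square algebra_simps)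
  also have "\<dots> = (h * (204/5 + 206 * h)) / (101 * (26/25) * (1 + (1/5 + h)^2))"
  proof -
    have gen: "(x * 101) / ((101 * (26/25)) * (101 * y)) = x / (101 * (26/25) * y)" for x y :: real
      by (cases "y = 0") (simp_all add: field_simps)
    show ?thesis by (rule gen)
  qed
  finally show ?thesis .
qed

lemma gap_small:
  assumes h: "0 < h" "h \<le> 3/5"
  shows "h/5 < Fv (1/5) - Fv (1/5 + h)"
proof -
  define D where "D = 101 * (26/25) * (1 + (1/5 + h)^2)"
  have D0: "0 < D" unfolding D_def using pos_den[of "1/5 + h"] by simp
  have "(1/5 + h) * (1/5 + h) \<le> (4/5) * (4/5)" using h by (intro mult_mono) auto
  then have D1: "D \<le> 101 * (26/25) * (1 + 16/25)" unfolding D_def by (simp add: power2_eq_square)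
  have "h/5 * D \<le> h/5 * (101 * (26/25) * (1 + 16/25))" using D1 h by (intro mult_left_mono) auto
  also have "\<dots> < h * (204/5 + 206 * h)"
  proof -
    have hh: "0 \<le> h * h" by simp
    have e1: "h/5 * (101 * (26/25) * (1 + 16/25)) = (107666/3125) * h" by simp
    have e2: "h * (204/5 + 206 * h) = (204/5) * h + 206 * (h * h)" by (simp add: algebra_simps)
    show ?thesis unfolding e1 e2 using hh h by linarith
  qed
  finally have "h/5 * D < h * (204/5 + 206 * h)" .
  then have "h/5 < h * (204/5 + 206 * h) / D" using D0 by (simp add: less_divide_eq)
  then show ?thesis unfolding gap_eq D_def .
qed

lemma gap_big: "1/2 < Fv (1/5) - Fv (4/5)"
  unfolding Fv_eq by (simp add: power2_eq_square)


lemma fid_val: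
  assumes "0 \<le> t" "t \<le> 1"
  shows "fidelity 2 (diag2 ((cp (1/10))^2) ((sp (1/10))^2)) (diag2 ((cp t)^2) ((sp t)^2)) = Fv t"
proof -
  have nn: "0 \<le> cp (1/10)" "0 \<le> sp (1/10)" "0 \<le> cp t" "0 \<le> sp t"
    using assms by (auto intro: cp_nonneg sp_nonneg)
  have "fidelity 2 (diag2 ((cp (1/10))^2) ((sp (1/10))^2)) (diag2 ((cp t)^2) ((sp t)^2))
     = sqrt ((cp t)^2 * (cp (1/10))^2) + sqrt ((sp t)^2 * (sp (1/10))^2)"
    by (rule fidelity_diag2) auto
  also have "\<dots> = Fv t" using nn by (simp add: real_sqrt_mult Fv_def mult.commute)
  finally show ?thesis .
qed

lemma adm_diag:
  assumes "1/10 \<le> t" "t \<le> 4/5"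
  shows "density 2 (diag2 ((cp t)^2) ((sp t)^2)) \<and>
    loewner_ge 2 (diag2 ((cp t)^2) ((sp t)^2)) ((1 / complex_of_real 100) \<cdot>\<^sub>m 1\<^sub>m 2)"
proof
  show "density 2 (diag2 ((cp t)^2) ((sp t)^2))" by (intro density_diag2) (auto simp: cp_sp)
  show "loewner_ge 2 (diag2 ((cp t)^2) ((sp t)^2)) ((1 / complex_of_real 100) \<cdot>\<^sub>m 1\<^sub>m 2)"
    using cp_lb[of t] sp_lb[of t] assms by (intro loewner_diag2) auto
qed

lemma rot_m: assumes "1 \<le> a" shows "0 < (2::nat)^a + 1" "(2::nat)^a + 1 < 2^(1+a)"
proof -
  have "2 \<le> (2::nat)^a" using assms by (metis one_le_numeral power_increasing power_one_right)
  then show "0 < (2::nat)^a + 1" "(2::nat)^a + 1 < 2^(1+a)" by auto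
qed

lemma main_bound:
  fixes a1 a2 :: nat and \<epsilon> :: real and A :: qalg
  assumes a1: "1 \<le> a1" and a2: "1 \<le> a2" and e0: "0 < \<epsilon>" and e1: "\<epsilon> < 1/4"
    and V: "valid_alg 1 a1 a2 A" and E: "estimates_fidelity 100 1 a1 a2 \<epsilon> A"
  shows "1/120/\<epsilon> \<le> real (nq A)"
proof -
  define h where "h = (if 10*\<epsilon> \<le> 3/5 then 10*\<epsilon> else 3/5)"
  have h: "0 < h" "h \<le> 3/5" "h \<le> 10*\<epsilon>" using e0 by (auto simp: h_def)
  define t1 where "t1 = (1/5::real)"
  define t2 where "t2 = 1/5 + h"
  have t1r: "1/10 \<le> t1" "t1 \<le> 4/5" by (simp_all add: t1_def)
  have t2r: "1/10 \<le> t2" "t2 \<le> 4/5" using h by (auto simp: t2_def)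
  have gap: "2*\<epsilon> < Fv t1 - Fv t2"
  proof (cases "10*\<epsilon> \<le> 3/5")
    case True
    then have "h = 10*\<epsilon>" by (simp add: h_def)
    then show ?thesis using gap_small[OF h(1) h(2)] unfolding t1_def t2_def by simp
  next
    case False
    then have "h = 3/5" by (simp add: h_def)
    then have t24: "t2 = 4/5" by (simp add: t2_def)
    show ?thesis unfolding t1_def t24 using gap_big e1 by simp
  qed
  define Or where "Or = rot (2^(1+a1)) (2^a1+1) (cp (1/10)) (sp (1/10))"
  define \<rho> where "\<rho> = diag2 ((cp (1/10))^2) ((sp (1/10))^2)"
  define Os where "Os = (\<lambda>t. rot (2^(1+a2)) (2^a2+1) (cp t) (sp t))"
  define \<sigma> where "\<sigma> = (\<lambda>t. diag2 ((cp t)^2) ((sp t)^2))"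
  have prepr: "prepares 1 a1 Or \<rho>" unfolding Or_def \<rho>_def by (rule rot_prepares[OF a1 cp_sp])
  have preps: "prepares 1 a2 (Os t) (\<sigma> t)" for t unfolding Os_def \<sigma>_def by (rule rot_prepares[OF a2 cp_sp])
  have admr: "density 2 \<rho> \<and> loewner_ge 2 \<rho> ((1 / complex_of_real 100) \<cdot>\<^sub>m 1\<^sub>m 2)"
    unfolding \<rho>_def by (rule adm_diag) auto
  have succ: "2/3 \<le> success_prob A 1 a1 a2 Or (Os t) (Fv t) \<epsilon>" if t: "1/10 \<le> t" "t \<le> 4/5" for t
  proof -
    have adms: "density 2 (\<sigma> t) \<and> loewner_ge 2 (\<sigma> t) ((1 / complex_of_real 100) \<cdot>\<^sub>m 1\<^sub>m 2)"
      unfolding \<sigma>_def by (rule adm_diag[OF t])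
    have f: "fidelity 2 \<rho> (\<sigma> t) = Fv t" unfolding \<rho>_def \<sigma>_def using t by (intro fid_val) auto
    have "2/3 \<le> success_prob A 1 a1 a2 Or (Os t) (fidelity (2^1) \<rho> (\<sigma> t)) \<epsilon>"
      using E unfolding estimates_fidelity_def using admr adms prepr preps[of t] by simp
    then show ?thesis using f by simp
  qed
  have UOr: "is_unitary (2^(1+a1)) Or" using prepr unfolding prepares_def by simp
  have UOs: "is_unitary (2^(1+a2)) (Os t)" for t using preps[of t] unfolding prepares_def by simp
  have C: "0 \<le> (2*h)^2" by simp
  have bOs: "bnd (2^(1+a2)) (Os t1) (Os t2) ((2*h)^2)"
  proof -
    have "(cp t1 - cp t2)^2 + (sp t1 - sp t2)^2 \<le> (2*h)^2" using dist_le[of t1 t2] by (simp add: t1_def t2_def)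
    then show ?thesis unfolding Os_def by (intro bnd_mono[OF rot_bnd[OF rot_m[OF a2]]])
  qed
  have bOsa: "bnd (2^(1+a2)) (adj (Os t1)) (adj (Os t2)) ((2*h)^2)"
  proof -
    have "(cp t1 - cp t2)^2 + (- sp t1 - - sp t2)^2 \<le> (2*h)^2" using dist_le[of t1 t2]
      by (simp add: t1_def t2_def power2_commute)
    then show ?thesis unfolding Os_def rot_adj by (intro bnd_mono[OF rot_bnd[OF rot_m[OF a2]]])
  qed
  define N where "N = (2::nat)^ws A"
  have N0: "0 < N" by (simp add: N_def)
  have ws: "1 + max a1 a2 + 1 \<le> ws A" using V unfolding valid_alg_def by simp
  have Uc: "\<And>t. t \<le> nq A \<Longrightarrow> U A t \<in> carrier_mat N N \<and> contr N (U A t)"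
    using V unitary_contr unfolding valid_alg_def N_def is_unitary_def by blast
  have Qc12: "\<And>t. t < nq A \<Longrightarrow> query_op A 1 a1 a2 Or (Os t1) t \<in> carrier_mat N N \<and> query_op A 1 a1 a2 Or (Os t2) t \<in> carrier_mat N N
    \<and> contr N (query_op A 1 a1 a2 Or (Os t1) t) \<and> contr N (query_op A 1 a1 a2 Or (Os t2) t)
    \<and> bnd N (query_op A 1 a1 a2 Or (Os t1) t) (query_op A 1 a1 a2 Or (Os t2) t) ((2*h)^2)"
    unfolding N_def by (rule query_props[OF ws UOr UOs UOs bOs bOsa C])
  have Qc11: "\<And>t. t < nq A \<Longrightarrow> query_op A 1 a1 a2 Or (Os t1) t \<in> carrier_mat N N \<and> query_op A 1 a1 a2 Or (Os t1) t \<in> carrier_mat N N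
    \<and> contr N (query_op A 1 a1 a2 Or (Os t1) t) \<and> contr N (query_op A 1 a1 a2 Or (Os t1) t)
    \<and> bnd N (query_op A 1 a1 a2 Or (Os t1) t) (query_op A 1 a1 a2 Or (Os t1) t) ((2*h)^2)"
    unfolding N_def by (rule query_props[OF ws UOr UOs UOs bnd_refl[OF C] bnd_refl[OF C] C])
  let ?R1 = "run_op A 1 a1 a2 Or (Os t1)"
  let ?R2 = "run_op A 1 a1 a2 Or (Os t2)"
  have dpos: "0 \<le> 2*h" using h by simp
  have H12: "?R1 (nq A) \<in> carrier_mat N N \<and> ?R2 (nq A) \<in> carrier_mat N N \<and> nrm N (mv (?R2 (nq A)) e0) \<le> 1
      \<and> nrm N (\<lambda>i. mv (?R1 (nq A)) e0 i - mv (?R2 (nq A)) e0 i) \<le> real (nq A) * (2*h)"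
    by (rule hybrid[where R="?R1" and R'="?R2" and Uf="U A" and Q="query_op A 1 a1 a2 Or (Os t1)"
        and Q'="query_op A 1 a1 a2 Or (Os t2)" and T="nq A" and N=N and \<delta>="2*h", OF _ _ _ _ Uc Qc12 dpos N0])
       simp_all
  have H11: "nrm N (mv (?R1 (nq A)) e0) \<le> 1"
  proof -
    have "?R1 (nq A) \<in> carrier_mat N N \<and> ?R1 (nq A) \<in> carrier_mat N N \<and> nrm N (mv (?R1 (nq A)) e0) \<le> 1
      \<and> nrm N (\<lambda>i. mv (?R1 (nq A)) e0 i - mv (?R1 (nq A)) e0 i) \<le> real (nq A) * (2*h)"
      by (rule hybrid[where R="?R1" and R'="?R1" and Uf="U A" and Q="query_op A 1 a1 a2 Or (Os t1)"
        and Q'="query_op A 1 a1 a2 Or (Os t1)" and T="nq A" and N=N and \<delta>="2*h", OF _ _ _ _ Uc Qc11 dpos N0])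
       simp_all
    then show ?thesis by simp
  qed
  define G1 where "G1 = {x. x < 2^ws A \<and> \<bar>out A x - Fv t1\<bar> \<le> \<epsilon>}"
  define G2 where "G2 = {x. x < 2^ws A \<and> \<bar>out A x - Fv t2\<bar> \<le> \<epsilon>}"
  have G: "G1 \<subseteq> {..<N}" "G2 \<subseteq> {..<N}" "G1 \<inter> G2 = {}"
    using gap by (auto simp: G1_def G2_def N_def)
  have p: "(\<Sum>x\<in>G. (cmod (mv (R (nq A)) e0 x))^2) = (\<Sum>x\<in>G. (cmod (R (nq A) $$ (x,0)))^2)"
    if "R (nq A) \<in> carrier_mat N N" for G R
    using that N0 by (intro sum.cong refl) (simp add: mv_e0)
  have p1: "2/3 \<le> (\<Sum>x\<in>G1. (cmod (mv (?R1 (nq A)) e0 x))^2)"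
    using succ[OF t1r] p[of ?R1 G1] H12 unfolding success_prob_def G1_def by simp
  have p2: "2/3 \<le> (\<Sum>x\<in>G2. (cmod (mv (?R2 (nq A)) e0 x))^2)"
    using succ[OF t2r] p[of ?R2 G2] H12 unfolding success_prob_def G2_def by simp
  have "1/6 \<le> nrm N (\<lambda>i. mv (?R1 (nq A)) e0 i - mv (?R2 (nq A)) e0 i)"
    using H11 H12 G p1 p2 by (intro distinguish) auto
  also have "\<dots> \<le> real (nq A) * (2*h)" using H12 by simp
  also have "\<dots> \<le> real (nq A) * (20 * \<epsilon>)" using h by (intro mult_left_mono) auto
  finally have "1/6 \<le> real (nq A) * (20 * \<epsilon>)" .
  then have "1 \<le> real (nq A) * \<epsilon> * 120" by (simp add: algebra_simps)
  then show ?thesis using e0 by (simp add: divide_simps mult.commute mult.left_commute)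
qed

theorem mainTheorem10:
  shows "\<exists>\<kappa>0::real. \<exists>c::real. \<exists>n::nat. \<kappa>0 \<ge> 1 \<and> c > 0 \<and> n \<ge> 1 \<and>
    (\<forall>a1 a2 (\<epsilon>::real) (A::qalg).
       n \<le> a1 \<longrightarrow> n \<le> a2 \<longrightarrow> 0 < \<epsilon> \<longrightarrow> \<epsilon> < 1/4 \<longrightarrow>
       valid_alg n a1 a2 A \<longrightarrow> estimates_fidelity \<kappa>0 n a1 a2 \<epsilon> A \<longrightarrow>
       real (nq A) \<ge> c / \<epsilon>)"
  apply (rule exI[of _ "100::real"])
  apply (rule exI[of _ "1/120::real"])
  apply (rule exI[of _ "1::nat"])
  apply (intro conjI)
     apply simp
    apply simp
   apply simp
  using main_bound by blast

end
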